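(* The map $\phi$ from nonempty faces of $V_0$ to $\mathcal{SC}(\mathcal M)$ is injective and order-preserving: if $F_1\subseteq F_2$ are faces of $V_0$, then $\phi(F_1)\le\phi(F_2)$.
   Context: Let $\mathcal M$ be a regular matroid on a finite ground set $E$, represented by a totally unimodular matrix $M$ with columns $c_e$; $\mathcal F=\ker M\subseteq\mathbb R^E$ with Euclidean inner product, $\Lambda=\ker M\cap\mathbb Z^E$, $V_0=\{x\in\mathcal F:\|x\|\le\|x-\mu\|\ \forall\mu\in\Lambda\}$. A circuit in $\Lambda$ is a flow with coordinates in $\{-1,0,1\}$ whose support is a circuit (minimal dependent set of columns) of $\mathcal M$; $\Xi$ is the set of these. For $\gamma\in\Xi$, $F_\gamma=\{x\in\mathcal F:2\langle x,\gamma\rangle=\|\gamma\|^2\}$. An oriented submatroid is $(S,\varepsilon)$, $S\subseteq E$, $\varepsilon:S\to\{\pm1\}$; it is strongly connected if for every $e\in S$ there is $w\in\mathbb Z_{\ge0}^S$ with $w_e\ge1$ and $\sum_{f\in S}w_f\varepsilon_fc_f=0$. $\mathcal{SC}(\mathcal M)$ is the set of these, ordered by $(S,\varepsilon)\le(S',\varepsilon')$ iff $S'\subseteq S$ and $\varepsilon'=\varepsilon|_{S'}$. For a nonempty face $F$ of $V_0$, $\mathcal U(F)=\{\gamma\in\Xi:F\subseteq F_\gamma\}$ and $\phi(F)=(S,\varepsilon)$ with $S=\bigcup_{\gamma\in\mathcal U(F)}\operatorname{supp}\gamma$ and $\varepsilon_e=\operatorname{sgn}\gamma_e$ for any $\gamma\in\mathcal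 U(F)$ with $e\in\operatorname{supp}\gamma$ (well defined). *)

theory Defs
  imports "HOL-Analysis.Analysis" "HOL-Library.FuncSet" "HOL-Combinatorics.Permutations"
begin

text \<open>Ground set E = UNIV of the finite type 'e; rows indexed by the finite type 'r.
  The matrix M has real entries; its column for e is column e M.\<close>

definition totally_unimodular :: "real^'e^'r \<Rightarrow> bool" where
  "totally_unimodular M \<longleftrightarrow>
     (\<forall>(k::nat) (f::nat \<Rightarrow> 'r) (g::nat \<Rightarrow> 'e).
        inj_on f {..<k} \<and> inj_on g {..<k} \<longrightarrow>
        (\<Sum>p | p permutes {..<k}. of_int (sign p) * (\<Prod>i<k. M $ f i $ g (p i)))
           \<in> {-1, 0, 1::real})"

definition flows :: "real^'e^'r \<Rightarrow> (real^'e) set" where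
  "flows M = {x. M *v x = 0}"

definition lattice_flows :: "real^'e^'r \<Rightarrow> (real^'e) set" where
  "lattice_flows M = {x \<in> flows M. \<forall>e. x $ e \<in> \<int>}"

definition voronoi0 :: "real^'e^'r \<Rightarrow> (real^'e) set" where
  "voronoi0 M = {x \<in> flows M. \<forall>\<mu> \<in> lattice_flows M. norm x \<le> norm (x - \<mu>)}"

definition supp :: "real^'e \<Rightarrow> 'e set" where
  "supp x = {e. x $ e \<noteq> 0}"

definition dependent_cols :: "real^'e^'r \<Rightarrow> 'e set \<Rightarrow> bool" where
  "dependent_cols M S \<longleftrightarrow>
     (\<exists>a::'e \<Rightarrow> real. (\<exists>e\<in>S. a e \<noteq> 0) \<and> (\<Sum>e\<in>S. a e *\<^sub>R column e M) = 0)"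

definition matroid_circuit :: "real^'e^'r \<Rightarrow> 'e set \<Rightarrow> bool" where
  "matroid_circuit M C \<longleftrightarrow> dependent_cols M C \<and> (\<forall>D. D \<subset> C \<longrightarrow> \<not> dependent_cols M D)"

definition lattice_circuits :: "real^'e^'r \<Rightarrow> (real^'e) set" where
  "lattice_circuits M = {\<gamma> \<in> lattice_flows M. (\<forall>e. \<gamma> $ e \<in> {-1, 0, 1}) \<and> matroid_circuit M (supp \<gamma>)}"

definition circuit_hyperplane :: "real^'e^'r \<Rightarrow> real^'e \<Rightarrow> (real^'e) set" where
  "circuit_hyperplane M \<gamma> = {x \<in> flows M. 2 * (x \<bullet> \<gamma>) = (norm \<gamma>)\<^sup>2}"

text \<open>Oriented submatroids (S, eps), with eps an extensional function S \<rightarrow> {-1,1}.\<close>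
definition oriented_submatroid :: "('e set \<times> ('e \<Rightarrow> real)) \<Rightarrow> bool" where
  "oriented_submatroid P \<longleftrightarrow> snd P \<in> fst P \<rightarrow>\<^sub>E {-1, 1}"

definition strongly_connected :: "real^'e^'r \<Rightarrow> ('e set \<times> ('e \<Rightarrow> real)) \<Rightarrow> bool" where
  "strongly_connected M P \<longleftrightarrow> oriented_submatroid P \<and>
     (\<forall>e \<in> fst P. \<exists>w::'e \<Rightarrow> nat. w e \<ge> 1 \<and>
        (\<Sum>f \<in> fst P. (real (w f) * snd P f) *\<^sub>R column f M) = 0)"

definition SC :: "real^'e^'r \<Rightarrow> ('e set \<times> ('e \<Rightarrow> real)) set" where
  "SC M = {P. strongly_connected M P}"

definition sc_le :: "('e set \<times> ('e \<Rightarrow> real)) \<Rightarrow> ('e set \<times> ('e \<Rightarrow> real)) \<Rightarrow> bool" where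
  "sc_le P Q \<longleftrightarrow> fst Q \<subseteq> fst P \<and> snd Q = restrict (snd P) (fst Q)"

definition U_face :: "real^'e^'r \<Rightarrow> (real^'e) set \<Rightarrow> (real^'e) set" where
  "U_face M F = {\<gamma> \<in> lattice_circuits M. F \<subseteq> circuit_hyperplane M \<gamma>}"

definition phi :: "real^'e^'r \<Rightarrow> (real^'e) set \<Rightarrow> ('e set \<times> ('e \<Rightarrow> real))" where
  "phi M F = (let S = (\<Union>\<gamma> \<in> U_face M F. supp \<gamma>) in
     (S, restrict (\<lambda>e. sgn ((SOME \<gamma>. \<gamma> \<in> U_face M F \<and> e \<in> supp \<gamma>) $ e)) S))"

end

theory Submission imports Defs "Jordan_Normal_Form.Determinant"
begin
no_notation Matrix.vec_index (infixl "$" 100)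
no_notation Matrix.scalar_prod (infix "\<bullet>" 70)


lemma tu_det:
  fixes M :: "real^'e::finite^'r::finite"
  assumes "totally_unimodular M" "inj_on f {..<k}" "inj_on g {..<k}"
  shows "Determinant.det (Matrix.mat k k (\<lambda>(i,j). M$f i$g j)) \<in> {-1,0,1}"
proof -
  have "Determinant.det (Matrix.mat k k (\<lambda>(i,j). M$f i$g j)) =
    (\<Sum>p | p permutes {..<k}. of_int (sign p) * (\<Prod>i<k. M $ f i $ g (p i)))"
    unfolding det_def
    by (auto simp: atLeast0LessThan intro!: sum.cong prod.cong arg_cong2[where f="(*)"]
        dest: permutes_in_image)
  moreover have "(\<Sum>p | p permutes {..<k}. of_int (sign p) * (\<Prod>i<k. M $ f i $ g (p i))) \<in> {-1,0,1}"
    using assms unfolding totally_unimodular_def by blast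
  ultimately show ?thesis by simp
qed

lemma det_zero_row:
  assumes "l < n" "\<And>j. j < n \<Longrightarrow> F (l,j) = (0::real)"
  shows "Determinant.det (Matrix.mat n n F) = 0"
proof -
  have "(\<Prod>i = 0..<n. Matrix.mat n n F $$ (i, p i)) = 0" if "p permutes {0..<n}" for p
  proof -
    have "p l < n" using assms(1) that by (auto dest: permutes_in_image)
    then show ?thesis
      using assms by (intro prod_zero) (auto intro!: bexI[of _ l])
  qed
  then show ?thesis unfolding det_def by (auto intro!: sum.neutral)
qed

lemma sum_col: "(\<Sum>e\<in>S. a e *\<^sub>R column e (M::real^'e::finite^'r::finite)) $ i = (\<Sum>e\<in>S. a e * M$i$e)"
  by (simp add: column_def sum_component)

lemma dep_iff:
  fixes M :: "real^'e::finite^'r::finite"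
  shows "dependent_cols M C \<longleftrightarrow> (\<exists>a. (\<exists>e\<in>C. a e \<noteq> 0) \<and> (\<forall>i. (\<Sum>e\<in>C. a e * M$i$e) = 0))"
proof -
  have "((\<Sum>e\<in>C. a e *\<^sub>R column e M) = 0) = (\<forall>i. (\<Sum>e\<in>C. a e * M$i$e) = 0)" for a
    unfolding Finite_Cartesian_Product.vec_eq_iff sum_col by simp
  then show ?thesis unfolding dependent_cols_def by simp
qed

lemma indep_minor:
  fixes M :: "real^'e::finite^'r::finite"
  assumes nd: "\<not> dependent_cols M C"
  shows "\<exists>f g. inj_on f {..<card C} \<and> bij_betw g {..<card C} C \<and>
     Determinant.det (Matrix.mat (card C) (card C) (\<lambda>(i,j). M$f i$g j)) \<noteq> 0"
proof -
  define m where "m = card C"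
  have finC: "finite C" by simp
  obtain g where g: "bij_betw g {..<m} C"
    using ex_bij_betw_nat_finite[OF finC] by (auto simp: m_def atLeast0LessThan)
  define Ind where "Ind R \<longleftrightarrow> (\<forall>a. (\<forall>e\<in>C. (\<Sum>i\<in>R. a i * M$i$e) = 0) \<longrightarrow> (\<forall>i\<in>R. a i = 0))"
    for R :: "'r set"
  have "Ind {}" by (simp add: Ind_def)
  define N where "N = Max (card ` {R. Ind R})"
  have finI: "finite (card ` {R. Ind R})" by simp
  have "N \<in> card ` {R. Ind R}" unfolding N_def using \<open>Ind {}\<close> by (intro Max_in finI) auto
  then obtain R where R: "Ind R" "card R = N" by auto
  have Rmax: "card R' \<le> card R" if "Ind R'" for R'
    using that R(2) N_def finI by (auto intro: Max_ge)
  have mR: "m \<le> card R"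
  proof (rule ccontr)
    assume "\<not> m \<le> card R"
    then have lt: "card R < m" by simp
    have span: "\<exists>c. \<forall>e\<in>C. M$i$e = (\<Sum>k\<in>R. c k * M$k$e)" for i
    proof (cases "i \<in> R")
      case True
      then show ?thesis
      proof (intro exI[of _ "\<lambda>k. if k = i then 1 else 0"] ballI)
        fix e
        have "(\<Sum>k\<in>R. (if k = i then 1 else 0) * M$k$e) = (\<Sum>k\<in>R. if k = i then M$k$e else 0)"
          by (rule sum.cong) auto
        then show "M$i$e = (\<Sum>k\<in>R. (if k = i then 1 else 0) * M$k$e)" using True by simp
      qed
    next
      case False
      then have "card (insert i R) > card R" by simp
      then have "\<not> Ind (insert i R)" using Rmax by force
      then obtain a where a: "\<forall>e\<in>C. (\<Sum>k\<in>insert i R. a k * M$k$e) = 0" "\<exists>k\<in>insert i R. a k \<noteq> 0"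
        unfolding Ind_def by blast
      have ai: "a i \<noteq> 0"
      proof
        assume "a i = 0"
        then have "\<forall>e\<in>C. (\<Sum>k\<in>R. a k * M$k$e) = 0" using a(1) False by simp
        then have "\<forall>k\<in>R. a k = 0" using R(1) unfolding Ind_def by blast
        then show False using a(2) \<open>a i = 0\<close> by auto
      qed
      show ?thesis
      proof (intro exI[of _ "\<lambda>k. - a k / a i"] ballI)
        fix e assume "e \<in> C"
        then have h: "a i * M$i$e + (\<Sum>k\<in>R. a k * M$k$e) = 0" using a(1) False by simp
        have "(\<Sum>k\<in>R. - a k / a i * M$k$e) = (\<Sum>k\<in>R. a k * M$k$e) * (- 1 / a i)"
          by (simp add: sum_distrib_right sum_negf sum_divide_distrib)
        also have "\<dots> = M$i$e" using h ai by (simp add: field_simps)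
        finally show "M$i$e = (\<Sum>k\<in>R. - a k / a i * M$k$e)" by simp
      qed
    qed
    obtain fR where fR: "bij_betw fR {..<card R} R"
      using ex_bij_betw_nat_finite[of R] by (auto simp: atLeast0LessThan)
    define B where "B = Matrix.mat m m (\<lambda>(l,j). if l < card R then M$fR l$g j else 0)"
    have "Determinant.det B = 0" unfolding B_def
      by (rule det_zero_row[of "m-1"]) (use lt in auto)
    then obtain v where v: "v \<in> carrier_vec m" "v \<noteq> 0\<^sub>v m" "B *\<^sub>v v = 0\<^sub>v m"
      using det_0_iff_vec_prod_zero_field[of B m] by (auto simp: B_def)
    define z :: "real^'e" where "z = (\<chi> e. if e \<in> C then vec_index v (inv_into {..<m} g e) else 0)"
    have zg: "z $ g j = vec_index v j" if "j < m" for j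
      using g that by (auto simp: z_def bij_betw_def inv_into_f_f)
    have rowR: "(\<Sum>e\<in>C. M$k$e * z$e) = 0" if "k \<in> R" for k
    proof -
      have "k \<in> fR ` {..<card R}" using fR that by (simp add: bij_betw_def)
      then obtain l where l: "l < card R" "k = fR l" by auto
      have "vec_index (B *\<^sub>v v) l = 0" using v(3) l lt by simp
      moreover have "vec_index (B *\<^sub>v v) l = (\<Sum>j<m. M$k$g j * vec_index v j)"
        using l lt v(1) by (simp add: B_def scalar_prod_def atLeast0LessThan)
      moreover have "(\<Sum>j<m. M$k$g j * vec_index v j) = (\<Sum>e\<in>C. M$k$e * z$e)"
        using sum.reindex_bij_betw[OF g, of "\<lambda>e. M$k$e * z$e"] zg by simp
      ultimately show ?thesis by simp
    qed
    have all: "\<forall>i. (\<Sum>e\<in>C. z$e * M$i$e) = 0"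
    proof
      fix i
      obtain c where c: "\<forall>e\<in>C. M$i$e = (\<Sum>k\<in>R. c k * M$k$e)" using span by blast
      have "(\<Sum>e\<in>C. z$e * M$i$e) = (\<Sum>e\<in>C. \<Sum>k\<in>R. z$e * (c k * M$k$e))"
        using c by (simp add: sum_distrib_left)
      also have "\<dots> = (\<Sum>k\<in>R. c k * (\<Sum>e\<in>C. M$k$e * z$e))"
        by (subst sum.swap) (simp add: sum_distrib_left mult_ac)
      also have "\<dots> = 0" using rowR by simp
      finally show "(\<Sum>e\<in>C. z$e * M$i$e) = 0" .
    qed
    have "\<exists>j<m. vec_index v j \<noteq> 0"
    proof (rule ccontr)
      assume "\<not> (\<exists>j<m. vec_index v j \<noteq> 0)"
      then have "v = 0\<^sub>v m" by (intro eq_vecI) (use v(1) in auto)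
      then show False using v(2) by simp
    qed
    then obtain j where j: "j < m" "vec_index v j \<noteq> 0" by blast
    have "g j \<in> C" using g j(1) by (auto simp: bij_betw_def)
    moreover have "z $ g j \<noteq> 0" using zg j by simp
    ultimately have "dependent_cols M C"
      unfolding dep_iff using all by blast
    then show False using nd by simp
  qed
  obtain R0 where R0: "R0 \<subseteq> R" "card R0 = m" using obtain_subset_with_card_n[OF mR] by metis
  have Ind0: "Ind R0"
    unfolding Ind_def
  proof (intro allI impI)
    fix a assume h: "\<forall>e\<in>C. (\<Sum>i\<in>R0. a i * M$i$e) = 0"
    define a' where "a' i = (if i \<in> R0 then a i else 0)" for i
    have "(\<Sum>i\<in>R. a' i * M$i$e) = (\<Sum>i\<in>R0. a' i * M$i$e)" for e
      by (rule sum.mono_neutral_right) (auto simp: a'_def R0)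
    also have "(\<Sum>i\<in>R0. a' i * M$i$e) = (\<Sum>i\<in>R0. a i * M$i$e)" for e
      by (simp add: a'_def)
    finally have "\<forall>e\<in>C. (\<Sum>i\<in>R. a' i * M$i$e) = 0" using h by simp
    then have "\<forall>i\<in>R. a' i = 0" using R(1) unfolding Ind_def by blast
    then show "\<forall>i\<in>R0. a i = 0"
    proof (intro ballI)
      fix i assume i: "i \<in> R0"
      then have "i \<in> R" using R0(1) by blast
      then have "a' i = 0" using \<open>\<forall>i\<in>R. a' i = 0\<close> by blast
      then show "a i = 0" using i by (simp add: a'_def)
    qed
  qed
  obtain f where f: "bij_betw f {..<m} R0"
    using ex_bij_betw_nat_finite[of R0] R0 by (auto simp: atLeast0LessThan)
  define B where "B = Matrix.mat m m (\<lambda>(i,j). M$f i$g j)"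
  have Bc: "B \<in> carrier_mat m m" by (simp add: B_def)
  have "Determinant.det B \<noteq> 0"
  proof
    assume "Determinant.det B = 0"
    then have "Determinant.det (transpose_mat B) = 0" by (simp add: det_transpose[OF Bc])
    then obtain v where v: "v \<in> carrier_vec m" "v \<noteq> 0\<^sub>v m" "transpose_mat B *\<^sub>v v = 0\<^sub>v m"
      using det_0_iff_vec_prod_zero_field[of "transpose_mat B" m] Bc by auto
    have col: "(\<Sum>l<m. M$f l$g j * vec_index v l) = 0" if "j < m" for j
    proof -
      have "vec_index (transpose_mat B *\<^sub>v v) j = 0" using v(3) that by simp
      then show ?thesis using that v(1) by (simp add: B_def scalar_prod_def atLeast0LessThan)
    qed
    define a where "a i = vec_index v (inv_into {..<m} f i)" for i
    have af: "a (f l) = vec_index v l" if "l < m" for l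
      using f that by (auto simp: a_def bij_betw_def inv_into_f_f)
    have "\<forall>e\<in>C. (\<Sum>i\<in>R0. a i * M$i$e) = 0"
    proof
      fix e assume "e \<in> C"
      then have "e \<in> g ` {..<m}" using g by (simp add: bij_betw_def)
      then obtain j where j: "j < m" "e = g j" by auto
      have "(\<Sum>i\<in>R0. a i * M$i$e) = (\<Sum>l<m. a (f l) * M$f l$e)"
        using sum.reindex_bij_betw[OF f, of "\<lambda>i. a i * M$i$e"] by simp
      also have "\<dots> = (\<Sum>l<m. M$f l$g j * vec_index v l)"
        using af j by (auto intro!: sum.cong)
      finally show "(\<Sum>i\<in>R0. a i * M$i$e) = 0" using col j by simp
    qed
    then have "\<forall>i\<in>R0. a i = 0" using Ind0 unfolding Ind_def by blast
    then have "\<forall>l<m. vec_index v l = 0" using af f by (auto simp: bij_betw_def)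
    then have "v = 0\<^sub>v m" by (intro eq_vecI) (use v(1) in auto)
    then show False using v(2) by simp
  qed
  then show ?thesis using f g unfolding m_def[symmetric] B_def
    by (intro exI[of _ f] exI[of _ g]) (auto simp: bij_betw_def)
qed

lemma flows_iff: "x \<in> flows M \<longleftrightarrow> (\<forall>i. (\<Sum>e\<in>UNIV. M$i$e * x$e) = 0)"
  by (simp add: flows_def Finite_Cartesian_Product.vec_eq_iff matrix_vector_mult_def)

lemma supp_iff: "e \<in> supp x \<longleftrightarrow> x$e \<noteq> 0" by (simp add: supp_def)

lemma sum_supp:
  fixes M :: "real^'e::finite^'r::finite"
  assumes "supp x \<subseteq> S"
  shows "(\<Sum>e\<in>UNIV. h e * x$e) = (\<Sum>e\<in>S. h e * x$e)"
  using assms by (intro sum.mono_neutral_right) (auto simp: supp_def)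

lemma circuit_flow:
  fixes M :: "real^'e::finite^'r::finite"
  assumes "matroid_circuit M C"
  shows "\<exists>y. y \<in> flows M \<and> supp y = C"
proof -
  from assms obtain a where a: "\<exists>e\<in>C. a e \<noteq> 0" "\<forall>i. (\<Sum>e\<in>C. a e * M$i$e) = 0"
    unfolding matroid_circuit_def dep_iff by blast
  define y :: "real^'e" where "y = (\<chi> e. if e \<in> C then a e else 0)"
  have sy: "supp y \<subseteq> C" by (auto simp: supp_def y_def)
  have "(\<Sum>e\<in>UNIV. M$i$e * y$e) = 0" for i
  proof -
    have "(\<Sum>e\<in>UNIV. M$i$e * y$e) = (\<Sum>e\<in>C. M$i$e * y$e)" by (rule sum_supp[OF sy])
    also have "\<dots> = (\<Sum>e\<in>C. a e * M$i$e)" by (rule sum.cong) (auto simp: y_def)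
    finally show ?thesis using a(2) by simp
  qed
  then have yf: "y \<in> flows M" by (simp add: flows_iff)
  have "dependent_cols M (supp y)"
    unfolding dep_iff
  proof (intro exI[of _ a] conjI allI)
    show "\<exists>e\<in>supp y. a e \<noteq> 0" using a(1) by (auto simp: supp_def y_def)
    fix i
    have "(\<Sum>e\<in>C. a e * M$i$e) = (\<Sum>e\<in>supp y. a e * M$i$e)"
      by (rule sum.mono_neutral_right) (auto simp: supp_def y_def sy)
    then show "(\<Sum>e\<in>supp y. a e * M$i$e) = 0" using a(2) by simp
  qed
  then have "supp y = C" using assms sy unfolding matroid_circuit_def by blast
  then show ?thesis using yf by blast
qed

lemma flows_scale: "y \<in> flows M \<Longrightarrow> c *\<^sub>R y \<in> flows M"
  by (simp add: flows_def matrix_vector_mult_scaleR)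

lemma circuit_pm1:
  fixes M :: "real^'e::finite^'r::finite"
  assumes TU: "totally_unimodular M" and C: "matroid_circuit M C"
  shows "\<exists>\<delta>. \<delta> \<in> flows M \<and> supp \<delta> = C \<and> (\<forall>e. \<delta>$e \<in> {-1,0,1})"
proof -
  obtain y where y: "y \<in> flows M" "supp y = C" using circuit_flow[OF C] by blast
  have "C \<noteq> {}" using C unfolding matroid_circuit_def dependent_cols_def by auto
  then obtain j0 where j0: "j0 \<in> C" by blast
  define C' where "C' = C - {j0}"
  have "C' \<subset> C" using j0 by (auto simp: C'_def)
  then have nd: "\<not> dependent_cols M C'" using C unfolding matroid_circuit_def by blast
  define m where "m = card C'"
  obtain f g where f: "inj_on f {..<m}" and g: "bij_betw g {..<m} C'"
    and d0: "Determinant.det (Matrix.mat m m (\<lambda>(i,j). M$f i$g j)) \<noteq> 0"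
    using indep_minor[OF nd] unfolding m_def by blast
  define B where "B = Matrix.mat m m (\<lambda>(i,j). M$f i$g j)"
  have Bc: "B \<in> carrier_mat m m" by (simp add: B_def)
  have detB: "Determinant.det B = 1 \<or> Determinant.det B = -1"
    using tu_det[OF TU f bij_betw_imp_inj_on[OF g]] d0 unfolding B_def by auto
  have "j0 \<in> supp y" using j0 y(2) by simp
  then have yj0: "y$j0 \<noteq> 0" by (simp add: supp_def)
  define y' where "y' = (-1 / y$j0) *\<^sub>R y"
  have y'f: "y' \<in> flows M" unfolding y'_def by (rule flows_scale[OF y(1)])
  have y'j0: "y'$j0 = -1" using yj0 by (simp add: y'_def)
  have suppy': "supp y' = C" using y(2) yj0 by (auto simp: supp_def y'_def)
  define x where "x = Matrix.vec m (\<lambda>j. y'$g j)"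
  define b where "b = Matrix.vec m (\<lambda>i. M$f i$j0)"
  have gC: "g j \<in> C'" if "j < m" for j using g that by (auto simp: bij_betw_def)
  have Bx: "B *\<^sub>v x = b"
  proof (rule eq_vecI)
    fix i assume "i < dim_vec b"
    then have i: "i < m" by (simp add: b_def)
    have "(\<Sum>e\<in>UNIV. M$f i$e * y'$e) = 0" using y'f by (simp add: flows_iff)
    moreover have "(\<Sum>e\<in>UNIV. M$f i$e * y'$e) = (\<Sum>e\<in>C. M$f i$e * y'$e)"
      by (rule sum_supp) (simp add: suppy')
    moreover have "(\<Sum>e\<in>C. M$f i$e * y'$e) = M$f i$j0 * y'$j0 + (\<Sum>e\<in>C'. M$f i$e * y'$e)"
      unfolding C'_def using j0 by (simp add: sum.remove)
    moreover have "(\<Sum>e\<in>C'. M$f i$e * y'$e) = (\<Sum>j<m. M$f i$g j * y'$g j)"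
      using sum.reindex_bij_betw[OF g, of "\<lambda>e. M$f i$e * y'$e"] by simp
    moreover have "vec_index (B *\<^sub>v x) i = (\<Sum>j<m. M$f i$g j * y'$g j)"
      using i by (simp add: B_def x_def scalar_prod_def atLeast0LessThan)
    ultimately show "vec_index (B *\<^sub>v x) i = vec_index b i" using i y'j0 by (simp add: b_def)
  qed (simp add: B_def b_def)
  have "y'$e \<in> {-1,0,1}" for e
  proof (cases "e \<in> C")
    case False
    then show ?thesis using suppy' by (auto simp: supp_def)
  next
    case True
    show ?thesis
    proof (cases "e = j0")
      case True then show ?thesis using y'j0 by simp
    next
      case False
      with \<open>e \<in> C\<close> have "e \<in> g ` {..<m}" using g by (simp add: bij_betw_def C'_def)
      then obtain j where j: "j < m" "e = g j" by auto
      have xc: "x \<in> carrier_vec m" by (simp add: x_def)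
      have cr: "Determinant.det (replace_col B b j) = vec_index x j * Determinant.det B"
        using cramer_lemma_mat[OF Bc xc j(1)] Bx by simp
      define g' where "g' = g(j := j0)"
      have "replace_col B b j = Matrix.mat m m (\<lambda>(i,l). M$f i$g' l)"
        by (rule eq_matI) (auto simp: replace_col_def B_def b_def g'_def)
      moreover have "inj_on g' {..<m}"
      proof (rule inj_onI)
        fix a c assume a: "a \<in> {..<m}" and c: "c \<in> {..<m}" and eq: "g' a = g' c"
        have ginj: "inj_on g {..<m}" using bij_betw_imp_inj_on[OF g] .
        have ne: "g l \<noteq> j0" if "l < m" for l using gC[OF that] by (simp add: C'_def)
        show "a = c"
        proof (cases "a = j")
          case True
          then show ?thesis using eq ne c by (cases "c = j") (auto simp: g'_def)
        next
          case False
          then show ?thesis using eq ne a c ginj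
            by (cases "c = j") (auto simp: g'_def inj_on_def)
        qed
      qed
      ultimately have "Determinant.det (replace_col B b j) \<in> {-1,0,1}"
        using tu_det[OF TU f] by simp
      then have "vec_index x j * Determinant.det B \<in> {-1,0,1}" using cr by simp
      moreover have "vec_index x j = y'$e" using j by (simp add: x_def)
      ultimately show ?thesis using detB by auto
    qed
  qed
  then show ?thesis using y'f suppy' by blast
qed

lemma elim_step:
  fixes a b t :: real
  assumes "t > 0" "a * b > 0 \<longrightarrow> t \<le> a / b" "a = 0 \<longrightarrow> b = 0" "a - t * b \<noteq> 0"
  shows "a \<noteq> 0 \<and> sgn (a - t * b) = sgn a"
proof -
  have a: "a \<noteq> 0" using assms(3,4) by auto
  show ?thesis
  proof (cases "a * b > 0")
    case True
    then have "t \<le> a / b" using assms(2) by simp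
    show ?thesis
    proof (cases "b > 0")
      case True
      then have "t * b \<le> a" using \<open>t \<le> a/b\<close> by (simp add: field_simps)
      moreover have "a > 0" using \<open>a*b>0\<close> True by (simp add: zero_less_mult_iff)
      ultimately show ?thesis using assms(4) a by (auto simp: sgn_if)
    next
      case False
      then have "b < 0" using \<open>a*b>0\<close> by (cases "b = 0") auto
      then have "t * b \<ge> a" using \<open>t \<le> a/b\<close> by (simp add: field_simps)
      moreover have "a < 0" using \<open>a*b>0\<close> \<open>b<0\<close> by (simp add: zero_less_mult_iff)
      ultimately show ?thesis using assms(4) a by (auto simp: sgn_if)
    qed
  next
    case False
    then have "a * b \<le> 0" by simp
    then have "(a > 0 \<and> b \<le> 0) \<or> (a < 0 \<and> b \<ge> 0)" using a
      by (auto simp: mult_le_0_iff)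
    moreover have "b \<le> 0 \<Longrightarrow> t * b \<le> 0" "b \<ge> 0 \<Longrightarrow> t * b \<ge> 0" using assms(1)
      by (simp_all add: mult_nonneg_nonpos)
    ultimately show ?thesis using a by (auto simp: sgn_if)
  qed
qed

lemma flows_diff: "y \<in> flows M \<Longrightarrow> z \<in> flows M \<Longrightarrow> y - z \<in> flows M"
  by (simp add: flows_def matrix_vector_mult_diff_distrib)

lemma flow_dep:
  fixes M :: "real^'e::finite^'r::finite"
  assumes "y \<in> flows M" "y \<noteq> 0"
  shows "dependent_cols M (supp y)"
  unfolding dep_iff
proof (intro exI[of _ "\<lambda>e. y$e"] conjI allI)
  show "\<exists>e\<in>supp y. y $ e \<noteq> 0" using assms(2) by (auto simp: supp_def Finite_Cartesian_Product.vec_eq_iff)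
  fix i
  have "(\<Sum>e\<in>supp y. y$e * M$i$e) = (\<Sum>e\<in>UNIV. M$i$e * y$e)"
    by (subst sum_supp[of y "supp y"]) (auto simp: mult.commute)
  then show "(\<Sum>e\<in>supp y. y$e * M$i$e) = 0" using assms(1) by (simp add: flows_iff)
qed

lemma dep_flow:
  fixes M :: "real^'e::finite^'r::finite"
  assumes "dependent_cols M D"
  shows "\<exists>z. z \<in> flows M \<and> z \<noteq> 0 \<and> supp z \<subseteq> D"
proof -
  from assms obtain a where a: "\<exists>e\<in>D. a e \<noteq> 0" "\<forall>i. (\<Sum>e\<in>D. a e * M$i$e) = 0"
    unfolding dep_iff by blast
  define z :: "real^'e" where "z = (\<chi> e. if e \<in> D then a e else 0)"
  have sz: "supp z \<subseteq> D" by (auto simp: supp_def z_def)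
  have "(\<Sum>e\<in>UNIV. M$i$e * z$e) = 0" for i
  proof -
    have "(\<Sum>e\<in>UNIV. M$i$e * z$e) = (\<Sum>e\<in>D. M$i$e * z$e)" by (rule sum_supp[OF sz])
    also have "\<dots> = (\<Sum>e\<in>D. a e * M$i$e)" by (rule sum.cong) (auto simp: z_def)
    finally show ?thesis using a(2) by simp
  qed
  moreover have "z \<noteq> 0" using a(1) by (auto simp: z_def Finite_Cartesian_Product.vec_eq_iff)
  ultimately show ?thesis using sz by (auto simp: flows_iff)
qed

lemma conformal_circuit_real:
  fixes M :: "real^'e::finite^'r::finite"
  assumes "\<mu> \<in> flows M" "\<mu> \<noteq> 0"
  shows "\<exists>y. y \<in> flows M \<and> y \<noteq> 0 \<and> (\<forall>e. y$e \<noteq> 0 \<longrightarrow> sgn (y$e) = sgn (\<mu>$e)) \<and> matroid_circuit M (supp y)"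
proof -
  define Conf where "Conf y \<longleftrightarrow> y \<in> flows M \<and> y \<noteq> 0 \<and> (\<forall>e. y$e \<noteq> 0 \<longrightarrow> sgn (y$e) = sgn (\<mu>$e))" for y
  have "Conf \<mu>" using assms by (simp add: Conf_def)
  then obtain y where y: "Conf y" and ymin: "\<And>y'. Conf y' \<Longrightarrow> card (supp y) \<le> card (supp y')"
    using ex_has_least_nat[of Conf \<mu> "\<lambda>y. card (supp y)"] by blast
  define C where "C = supp y"
  have "matroid_circuit M C"
    unfolding matroid_circuit_def
  proof (intro conjI allI impI notI)
    show "dependent_cols M C" unfolding C_def using y flow_dep[of y M] by (simp add: Conf_def)
    fix D assume DC: "D \<subset> C" and dD: "dependent_cols M D"
    obtain z where z: "z \<in> flows M" "z \<noteq> 0" "supp z \<subseteq> D" using dep_flow[OF dD] by blast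
    obtain e1 where e1: "z$e1 \<noteq> 0" using z(2) by (auto simp: Finite_Cartesian_Product.vec_eq_iff)
    then have "e1 \<in> C" using z(3) DC by (auto simp: supp_def)
    then have "y$e1 \<noteq> 0" by (simp add: C_def supp_def)
    obtain z' where z': "z' \<in> flows M" "supp z' \<subseteq> D" "\<exists>e. z'$e * y$e > 0"
    proof (cases "z$e1 * y$e1 > 0")
      case True
      then show ?thesis using that[of z] z by blast
    next
      case False
      moreover have "z$e1 * y$e1 \<noteq> 0" using e1 \<open>y$e1 \<noteq> 0\<close> by simp
      ultimately have "z$e1 * y$e1 < 0" by linarith
      then have "(-z)$e1 * y$e1 > 0" by simp
      moreover have "-z \<in> flows M" using flows_scale[OF z(1), of "-1"] by simp
      moreover have "supp (-z) \<subseteq> D" using z(3) by (auto simp: supp_def)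
      ultimately show ?thesis using that[of "-z"] by blast
    qed
    define P where "P = {e. z'$e * y$e > 0}"
    have Pne: "P \<noteq> {}" using z'(3) by (auto simp: P_def)
    define t where "t = Min ((\<lambda>e. y$e / z'$e) ` P)"
    have "t \<in> (\<lambda>e. y$e / z'$e) ` P" unfolding t_def using Pne by (intro Min_in) auto
    then obtain e0 where e0: "e0 \<in> P" "t = y$e0 / z'$e0" by blast
    have tle: "t \<le> y$e / z'$e" if "e \<in> P" for e unfolding t_def using that by (intro Min_le) auto
    have tpos: "t > 0" using e0 by (auto simp: P_def zero_less_mult_iff zero_less_divide_iff)
    define y' where "y' = y - t *\<^sub>R z'"
    have yf: "y \<in> flows M" using y by (simp add: Conf_def)
    have y'f: "y' \<in> flows M" unfolding y'_def by (intro flows_diff flows_scale yf z'(1))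
    have zy: "y$e = 0 \<longrightarrow> z'$e = 0" for e using z'(2) DC by (auto simp: C_def supp_def)
    have step: "y'$e \<noteq> 0 \<Longrightarrow> y$e \<noteq> 0 \<and> sgn (y'$e) = sgn (y$e)" for e
    proof -
      assume h: "y'$e \<noteq> 0"
      have h1: "y$e - t * z'$e \<noteq> 0" using h by (simp add: y'_def)
      have h2: "y$e * z'$e > 0 \<longrightarrow> t \<le> y$e / z'$e"
      proof
        assume "y$e * z'$e > 0"
        then have "e \<in> P" by (simp add: P_def mult.commute)
        then show "t \<le> y$e / z'$e" by (rule tle)
      qed
      have "y$e \<noteq> 0 \<and> sgn (y$e - t * z'$e) = sgn (y$e)"
        by (rule elim_step[OF tpos h2 zy[of e] h1])
      moreover have "y'$e = y$e - t * z'$e" by (simp add: y'_def)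
      ultimately show ?thesis by simp
    qed
    have y'e0: "y'$e0 = 0" using e0 by (auto simp: y'_def P_def)
    obtain e2 where e2: "e2 \<in> C" "e2 \<notin> D" using DC by blast
    have "z'$e2 = 0" using z'(2) e2 by (auto simp: supp_def)
    then have "y'$e2 \<noteq> 0" using e2 by (simp add: y'_def C_def supp_def)
    then have "y' \<noteq> 0" by auto
    moreover have "\<forall>e. y'$e \<noteq> 0 \<longrightarrow> sgn (y'$e) = sgn (\<mu>$e)"
    proof (intro allI impI)
      fix e assume "y'$e \<noteq> 0"
      then have "y$e \<noteq> 0" "sgn (y'$e) = sgn (y$e)" using step by blast+
      then show "sgn (y'$e) = sgn (\<mu>$e)" using y unfolding Conf_def by simp
    qed
    ultimately have "Conf y'" using y'f unfolding Conf_def by blast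
    moreover have "supp y' \<subseteq> C - {e0}" using step y'e0 by (auto simp: C_def supp_def)
    moreover have "e0 \<in> C" using e0 zy by (auto simp: P_def C_def supp_def)
    ultimately have "card (supp y') < card C"
    proof -
      assume a1: "supp y' \<subseteq> C - {e0}" and a2: "e0 \<in> C"
      have "card (supp y') \<le> card (C - {e0})" using a1 by (intro card_mono) auto
      also have "\<dots> < card C" using a2 by (intro card_Diff1_less) auto
      finally show ?thesis .
    qed
    then show False using ymin[OF \<open>Conf y'\<close>] by (simp add: C_def)
  qed
  then show ?thesis using y unfolding Conf_def C_def by blast
qed


lemma conformal_circuit:
  fixes M :: "real^'e::finite^'r::finite"
  assumes TU: "totally_unimodular M" and "\<mu> \<in> flows M" "\<mu> \<noteq> 0"
  shows "\<exists>\<delta>\<in>lattice_circuits M. \<delta> \<noteq> 0 \<and> (\<forall>e. \<delta>$e \<noteq> 0 \<longrightarrow> \<delta>$e = sgn (\<mu>$e))"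
proof -
  obtain y where y: "y \<in> flows M" "y \<noteq> 0" "\<forall>e. y$e \<noteq> 0 \<longrightarrow> sgn (y$e) = sgn (\<mu>$e)"
    and C: "matroid_circuit M (supp y)"
    using conformal_circuit_real[OF assms(2,3)] by blast
  obtain \<delta> where d: "\<delta> \<in> flows M" "supp \<delta> = supp y" "\<forall>e. \<delta>$e \<in> {-1,0,1}"
    using circuit_pm1[OF TU C] by blast
  obtain e1 where e1: "y$e1 \<noteq> 0" using y(2) by (auto simp: Finite_Cartesian_Product.vec_eq_iff)
  define c where "c = \<delta>$e1 / y$e1"
  define w where "w = \<delta> - c *\<^sub>R y"
  have wf: "w \<in> flows M" unfolding w_def by (intro flows_diff flows_scale d(1) y(1))
  have we1: "w$e1 = 0" using e1 by (simp add: w_def c_def)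
  have sw: "supp w \<subseteq> supp y - {e1}"
  proof
    fix e assume "e \<in> supp w"
    then have "w$e \<noteq> 0" by (simp add: supp_def)
    then have "\<delta>$e \<noteq> 0 \<or> y$e \<noteq> 0" by (auto simp: w_def)
    then have "y$e \<noteq> 0" using d(2) by (auto simp: supp_def)
    then show "e \<in> supp y - {e1}" using we1 \<open>w$e \<noteq> 0\<close> by (auto simp: supp_def)
  qed
  have "w = 0"
  proof (rule ccontr)
    assume "w \<noteq> 0"
    then have "dependent_cols M (supp w)" using flow_dep wf by blast
    moreover have "supp w \<subset> supp y" using sw e1 by (auto simp: supp_def)
    ultimately show False using C unfolding matroid_circuit_def by blast
  qed
  then have dc: "\<delta> = c *\<^sub>R y" by (simp add: w_def)
  have "e1 \<in> supp \<delta>" using d(2) e1 by (simp add: supp_def)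
  then have "c \<noteq> 0" using dc by (auto simp: supp_def)
  define \<delta>' where "\<delta>' = sgn c *\<^sub>R \<delta>"
  have d'f: "\<delta>' \<in> flows M" unfolding \<delta>'_def by (rule flows_scale[OF d(1)])
  have d'e: "\<delta>'$e \<in> {-1,0,1}" for e using d(3)[rule_format, of e] \<open>c \<noteq> 0\<close>
    by (auto simp: \<delta>'_def sgn_if)
  have sd': "supp \<delta>' = supp y" using d(2) \<open>c \<noteq> 0\<close> by (auto simp: supp_def \<delta>'_def sgn_if)
  have d'y: "\<delta>'$e = \<bar>c\<bar> * y$e" for e by (simp add: \<delta>'_def dc abs_sgn mult.commute)
  have conf: "\<delta>'$e = sgn (\<mu>$e)" if "\<delta>'$e \<noteq> 0" for e
  proof -
    have "y$e \<noteq> 0" using that d'y by auto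
    then have "sgn (\<delta>'$e) = sgn (\<mu>$e)" using y(3) d'y \<open>c \<noteq> 0\<close> by (simp add: sgn_mult)
    moreover have "sgn (\<delta>'$e) = \<delta>'$e" using d'e[of e] by auto
    ultimately show ?thesis by simp
  qed
  have "\<delta>' \<in> lattice_circuits M"
  proof -
    have "\<delta>'$e \<in> \<int>" for e using d'e[of e] by auto
    then show ?thesis
      unfolding lattice_circuits_def lattice_flows_def using d'f d'e sd' C by auto
  qed
  moreover have "\<delta>' \<noteq> 0" using sd' e1 by (auto simp: supp_def)
  ultimately show ?thesis using conf by blast
qed


lemma norm2_sum: "(norm (x::real^'e::finite))\<^sup>2 = (\<Sum>e\<in>UNIV. (x$e)\<^sup>2)"
  unfolding norm_vec_def L2_set_def by (simp add: sum_nonneg)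

lemma inner_sum: "inner (x::real^'e::finite) y = (\<Sum>e\<in>UNIV. x$e * y$e)"
  by (simp add: inner_vec_def)

lemma norm2_pm1:
  assumes "\<forall>e. (\<gamma>::real^'e::finite)$e \<in> {-1,0,1}"
  shows "(norm \<gamma>)\<^sup>2 = (\<Sum>e\<in>UNIV. \<bar>\<gamma>$e\<bar>)"
  unfolding norm2_sum
proof (rule sum.cong)
  fix e show "(\<gamma>$e)\<^sup>2 = \<bar>\<gamma>$e\<bar>" using assms[rule_format, of e] by auto
qed simp

lemma key_ineq:
  fixes M :: "real^'e::finite^'r::finite"
  assumes TU: "totally_unimodular M"
    and circ: "\<forall>\<gamma>\<in>lattice_circuits M. 2 * inner x \<gamma> \<le> (norm \<gamma>)\<^sup>2"
    and mu: "\<mu> \<in> lattice_flows M"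
  shows "2 * inner x \<mu> \<le> (\<Sum>e\<in>UNIV. \<bar>\<mu>$e\<bar>)"
proof -
  have "\<forall>\<mu>. \<mu> \<in> lattice_flows M \<longrightarrow> (\<Sum>e\<in>UNIV. \<bar>\<mu>$e\<bar>) \<le> real n \<longrightarrow> 2 * inner x \<mu> \<le> (\<Sum>e\<in>UNIV. \<bar>\<mu>$e\<bar>)" for n
  proof (induction n)
    case 0
    show ?case
    proof (intro allI impI)
      fix \<mu> :: "real^'e" assume "(\<Sum>e\<in>UNIV. \<bar>\<mu>$e\<bar>) \<le> real 0"
      moreover have "(\<Sum>e\<in>UNIV. \<bar>\<mu>$e\<bar>) \<ge> 0" by (simp add: sum_nonneg)
      ultimately have "(\<Sum>e\<in>UNIV. \<bar>\<mu>$e\<bar>) = 0" by simp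
      then have "\<forall>e\<in>UNIV. \<bar>\<mu>$e\<bar> = 0" by (subst (asm) sum_nonneg_eq_0_iff) auto
      then have "\<mu> = 0" by (simp add: Finite_Cartesian_Product.vec_eq_iff)
      then show "2 * inner x \<mu> \<le> (\<Sum>e\<in>UNIV. \<bar>\<mu>$e\<bar>)" by simp
    qed
  next
    case (Suc n)
    show ?case
    proof (intro allI impI)
      fix \<mu> :: "real^'e" assume mu: "\<mu> \<in> lattice_flows M" and le: "(\<Sum>e\<in>UNIV. \<bar>\<mu>$e\<bar>) \<le> real (Suc n)"
      show "2 * inner x \<mu> \<le> (\<Sum>e\<in>UNIV. \<bar>\<mu>$e\<bar>)"
      proof (cases "\<mu> = 0")
        case True then show ?thesis by simp
      next
        case False
        have muf: "\<mu> \<in> flows M" and muZ: "\<And>e. \<mu>$e \<in> \<int>" using mu by (auto simp: lattice_flows_def)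
        obtain \<delta> where d: "\<delta> \<in> lattice_circuits M" "\<delta> \<noteq> 0" "\<forall>e. \<delta>$e \<noteq> 0 \<longrightarrow> \<delta>$e = sgn (\<mu>$e)"
          using conformal_circuit[OF TU muf False] by blast
        have dpm: "\<forall>e. \<delta>$e \<in> {-1,0,1}" and df: "\<delta> \<in> flows M" and dZ: "\<And>e. \<delta>$e \<in> \<int>"
          using d(1) by (auto simp: lattice_circuits_def lattice_flows_def)
        define \<mu>' where "\<mu>' = \<mu> - \<delta>"
        have mu': "\<mu>' \<in> lattice_flows M"
          using flows_diff[OF muf df] muZ dZ by (auto simp: lattice_flows_def \<mu>'_def)
        have abs: "\<bar>\<mu>'$e\<bar> = \<bar>\<mu>$e\<bar> - \<bar>\<delta>$e\<bar>" for e
        proof (cases "\<delta>$e = 0")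
          case True then show ?thesis by (simp add: \<mu>'_def)
        next
          case False
          then have de: "\<delta>$e = sgn (\<mu>$e)" using d(3) by blast
          then have "\<mu>$e \<noteq> 0" using False by auto
          then have "\<bar>\<mu>$e\<bar> \<ge> 1" using Ints_nonzero_abs_ge1 muZ by blast
          then show ?thesis using de \<open>\<mu>$e \<noteq> 0\<close> by (auto simp: \<mu>'_def sgn_if)
        qed
        then have s: "(\<Sum>e\<in>UNIV. \<bar>\<mu>'$e\<bar>) = (\<Sum>e\<in>UNIV. \<bar>\<mu>$e\<bar>) - (\<Sum>e\<in>UNIV. \<bar>\<delta>$e\<bar>)"
          by (simp add: sum_subtractf)
        obtain e0 where "\<delta>$e0 \<noteq> 0" using d(2) by (auto simp: Finite_Cartesian_Product.vec_eq_iff)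
        then have "\<bar>\<delta>$e0\<bar> \<ge> 1" using Ints_nonzero_abs_ge1 dZ by blast
        moreover have "\<bar>\<delta>$e0\<bar> \<le> (\<Sum>e\<in>UNIV. \<bar>\<delta>$e\<bar>)"
          by (rule member_le_sum) auto
        ultimately have "(\<Sum>e\<in>UNIV. \<bar>\<mu>'$e\<bar>) \<le> real n" using s le by simp
        then have ih: "2 * inner x \<mu>' \<le> (\<Sum>e\<in>UNIV. \<bar>\<mu>'$e\<bar>)" using Suc.IH mu' by blast
        have "2 * inner x \<delta> \<le> (\<Sum>e\<in>UNIV. \<bar>\<delta>$e\<bar>)" using circ d(1) norm2_pm1[OF dpm] by auto
        moreover have "inner x \<mu> = inner x \<mu>' + inner x \<delta>" by (simp add: \<mu>'_def inner_diff_right)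
        ultimately show ?thesis using ih s by simp
      qed
    qed
  qed
  moreover obtain n :: nat where "(\<Sum>e\<in>UNIV. \<bar>\<mu>$e\<bar>) \<le> real n" using real_arch_simple by blast
  ultimately show ?thesis using mu by blast
qed


lemma norm_le_iff: "norm (x::'a::real_inner) \<le> norm (x - m) \<longleftrightarrow> 2 * inner x m \<le> (norm m)\<^sup>2"
  by (simp add: norm_le inner_diff_left inner_diff_right inner_commute power2_norm_eq_inner)

lemma int_abs_le_sq: "a \<in> \<int> \<Longrightarrow> \<bar>a::real\<bar> \<le> a\<^sup>2"
proof (cases "a = 0")
  case False
  assume "a \<in> \<int>"
  then have "1 \<le> \<bar>a\<bar>" using False Ints_nonzero_abs_ge1 by blast
  then have "\<bar>a\<bar> * 1 \<le> \<bar>a\<bar> * \<bar>a\<bar>" by (intro mult_left_mono) auto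
  then show ?thesis by (simp add: power2_eq_square abs_mult_self_eq)
qed simp

lemma lc_facts:
  assumes "\<gamma> \<in> lattice_circuits M"
  shows "\<gamma> \<in> lattice_flows M" "\<gamma> \<in> flows M" "\<forall>e. \<gamma>$e \<in> {-1,0,1}" "matroid_circuit M (supp \<gamma>)"
  using assms by (auto simp: lattice_circuits_def lattice_flows_def)

lemma V0_circ_aux:
  assumes "\<forall>\<mu>\<in>lattice_flows M. norm x \<le> norm (x - \<mu>)" "\<gamma> \<in> lattice_circuits M"
  shows "2 * inner x \<gamma> \<le> (norm \<gamma>)\<^sup>2"
proof -
  have "\<gamma> \<in> lattice_flows M" using lc_facts(1)[OF assms(2)] .
  then have "norm x \<le> norm (x - \<gamma>)" using assms(1) by blast
  then show ?thesis by (simp add: norm_le_iff)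
qed

lemma V0_char:
  fixes M :: "real^'e::finite^'r::finite"
  assumes TU: "totally_unimodular M"
  shows "voronoi0 M = {x \<in> flows M. \<forall>\<gamma>\<in>lattice_circuits M. 2 * inner x \<gamma> \<le> (norm \<gamma>)\<^sup>2}"
proof (intro equalityI subsetI)
  fix x assume "x \<in> voronoi0 M"
  then show "x \<in> {x \<in> flows M. \<forall>\<gamma>\<in>lattice_circuits M. 2 * inner x \<gamma> \<le> (norm \<gamma>)\<^sup>2}"
    using V0_circ_aux by (auto simp: voronoi0_def)
next
  fix x assume x: "x \<in> {x \<in> flows M. \<forall>\<gamma>\<in>lattice_circuits M. 2 * inner x \<gamma> \<le> (norm \<gamma>)\<^sup>2}"
  have "norm x \<le> norm (x - \<mu>)" if mu: "\<mu> \<in> lattice_flows M" for \<mu>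
  proof -
    have "2 * inner x \<mu> \<le> (\<Sum>e\<in>UNIV. \<bar>\<mu>$e\<bar>)" by (rule key_ineq[OF TU _ mu]) (use x in auto)
    also have "\<dots> \<le> (\<Sum>e\<in>UNIV. (\<mu>$e)\<^sup>2)"
      using mu by (intro sum_mono int_abs_le_sq) (auto simp: lattice_flows_def)
    also have "\<dots> = (norm \<mu>)\<^sup>2" by (simp add: norm2_sum)
    finally show ?thesis by (simp add: norm_le_iff)
  qed
  then show "x \<in> voronoi0 M" using x by (auto simp: voronoi0_def)
qed

lemma V0_circ:
  fixes M :: "real^'e::finite^'r::finite"
  assumes "x \<in> voronoi0 M" "\<gamma> \<in> lattice_circuits M"
  shows "2 * inner x \<gamma> \<le> (norm \<gamma>)\<^sup>2"
  using assms V0_circ_aux by (auto simp: voronoi0_def)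

lemma V0_flows: "x \<in> voronoi0 M \<Longrightarrow> x \<in> flows M"
  by (simp add: voronoi0_def)

lemma flows_add: "y \<in> flows M \<Longrightarrow> z \<in> flows M \<Longrightarrow> y + z \<in> flows M"
  by (simp add: flows_def matrix_vector_right_distrib)

lemma finite_pm1: "finite {x::real^'e::finite. \<forall>e. x$e \<in> A}" if "finite A"
proof -
  have "inj_on vec_nth {x::real^'e. \<forall>e. x$e \<in> A}" by (simp add: inj_on_def vec_nth_inject)
  moreover have "vec_nth ` {x::real^'e. \<forall>e. x$e \<in> A} \<subseteq> Pi\<^sub>E UNIV (\<lambda>_. A)" by (auto simp: PiE_UNIV_domain)
  moreover have "finite (Pi\<^sub>E (UNIV::'e set) (\<lambda>_. A))" using that by (intro finite_PiE) auto
  ultimately show ?thesis using inj_on_finite by blast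
qed

lemma finite_circ: "finite (lattice_circuits (M::real^'e::finite^'r::finite))"
proof -
  have "lattice_circuits M \<subseteq> {x::real^'e. \<forall>e. x$e \<in> {-1,0,1}}" using lc_facts(3) by blast
  then show ?thesis using finite_pm1[of "{-1,0,1::real}"] finite_subset by blast
qed

lemma consistent:
  fixes M :: "real^'e::finite^'r::finite"
  assumes TU: "totally_unimodular M" and x: "x \<in> voronoi0 M"
    and g1: "\<gamma>1 \<in> lattice_circuits M" and g2: "\<gamma>2 \<in> lattice_circuits M"
    and t1: "2 * inner x \<gamma>1 = (norm \<gamma>1)\<^sup>2" and t2: "2 * inner x \<gamma>2 = (norm \<gamma>2)\<^sup>2"
    and e1: "\<gamma>1$e \<noteq> 0" and e2: "\<gamma>2$e \<noteq> 0"
  shows "\<gamma>1$e = \<gamma>2$e"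
proof (rule ccontr)
  assume ne: "\<gamma>1$e \<noteq> \<gamma>2$e"
  have p1: "\<forall>f. \<gamma>1$f \<in> {-1,0,1}" and p2: "\<forall>f. \<gamma>2$f \<in> {-1,0,1}" using lc_facts g1 g2 by blast+
  define \<mu> where "\<mu> = \<gamma>1 + \<gamma>2"
  have mu: "\<mu> \<in> lattice_flows M"
    using lc_facts(1)[OF g1] lc_facts(1)[OF g2] flows_add
    by (auto simp: lattice_flows_def \<mu>_def)
  have circ: "\<forall>\<gamma>\<in>lattice_circuits M. 2 * inner x \<gamma> \<le> (norm \<gamma>)\<^sup>2" using V0_circ[OF x] by blast
  have "2 * inner x \<mu> \<le> (\<Sum>f\<in>UNIV. \<bar>\<mu>$f\<bar>)" by (rule key_ineq[OF TU circ mu])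
  also have "\<dots> < (\<Sum>f\<in>UNIV. \<bar>\<gamma>1$f\<bar> + \<bar>\<gamma>2$f\<bar>)"
  proof (rule sum_strict_mono_ex1)
    show "\<forall>f\<in>UNIV. \<bar>\<mu>$f\<bar> \<le> \<bar>\<gamma>1$f\<bar> + \<bar>\<gamma>2$f\<bar>" by (simp add: \<mu>_def abs_triangle_ineq)
    have "\<gamma>1$e = - \<gamma>2$e" using ne e1 e2 p1[rule_format, of e] p2[rule_format, of e] by auto
    then have "\<bar>\<mu>$e\<bar> < \<bar>\<gamma>1$e\<bar> + \<bar>\<gamma>2$e\<bar>" using e1 by (simp add: \<mu>_def)
    then show "\<exists>f\<in>UNIV. \<bar>\<mu>$f\<bar> < \<bar>\<gamma>1$f\<bar> + \<bar>\<gamma>2$f\<bar>" by blast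
  qed simp
  also have "\<dots> = (norm \<gamma>1)\<^sup>2 + (norm \<gamma>2)\<^sup>2" by (simp add: norm2_pm1[OF p1] norm2_pm1[OF p2] sum.distrib)
  also have "\<dots> = 2 * inner x \<mu>" using t1 t2 by (simp add: \<mu>_def inner_add_right)
  finally show False by simp
qed


lemma conf_tight:
  fixes M :: "real^'e::finite^'r::finite"
  assumes TU: "totally_unimodular M" and x: "x \<in> voronoi0 M"
    and G: "G \<subseteq> lattice_circuits M" "finite G"
    and Gt: "\<forall>g\<in>G. 2 * inner x g = (norm g)\<^sup>2"
    and cons: "\<forall>g1\<in>G. \<forall>g2\<in>G. \<forall>e. g1$e \<noteq> 0 \<and> g2$e \<noteq> 0 \<longrightarrow> g1$e = g2$e"
    and ga: "\<gamma> \<in> lattice_circuits M"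
    and cover: "\<forall>e. \<gamma>$e \<noteq> 0 \<longrightarrow> (\<exists>g\<in>G. g$e \<noteq> 0)"
    and agree: "\<forall>g\<in>G. \<forall>e. \<gamma>$e \<noteq> 0 \<and> g$e \<noteq> 0 \<longrightarrow> \<gamma>$e = g$e"
  shows "2 * inner x \<gamma> = (norm \<gamma>)\<^sup>2"
proof -
  have pm: "\<forall>e. g$e \<in> {-1,0,1}" if "g \<in> lattice_circuits M" for g using lc_facts(3)[OF that] .
  define \<sigma> where "\<sigma> = (\<Sum>g\<in>G. g)"
  define \<nu> where "\<nu> = \<sigma> - \<gamma>"
  have \<sigma>e: "\<sigma>$e = (\<Sum>g\<in>G. g$e)" for e by (simp add: \<sigma>_def sum_component)
  have \<sigma>f: "\<sigma> \<in> flows M"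
    unfolding flows_iff
  proof
    fix i
    have "(\<Sum>f\<in>UNIV. M$i$f * \<sigma>$f) = (\<Sum>g\<in>G. \<Sum>f\<in>UNIV. M$i$f * g$f)"
      by (simp add: \<sigma>e sum_distrib_left sum.swap[of _ G])
    also have "\<dots> = 0" using G lc_facts(2) by (intro sum.neutral) (auto simp: flows_iff)
    finally show "(\<Sum>f\<in>UNIV. M$i$f * \<sigma>$f) = 0" .
  qed
  have \<nu>l: "\<nu> \<in> lattice_flows M"
  proof -
    have "\<sigma>$e \<in> \<int>" for e unfolding \<sigma>e using G lc_facts(1) by (intro Ints_sum) (auto simp: lattice_flows_def)
    then show ?thesis using flows_diff[OF \<sigma>f lc_facts(2)[OF ga]] lc_facts(1)[OF ga]
      by (auto simp: \<nu>_def lattice_flows_def)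
  qed
  have abs\<nu>: "\<bar>\<nu>$e\<bar> = (\<Sum>g\<in>G. \<bar>g$e\<bar>) - \<bar>\<gamma>$e\<bar>" for e
  proof (cases "\<exists>g\<in>G. g$e \<noteq> 0")
    case True
    then obtain g0 where g0: "g0 \<in> G" "g0$e \<noteq> 0" by blast
    define s where "s = g0$e"
    have s: "s = 1 \<or> s = -1" using pm[of g0] g0 G by (auto simp: s_def)
    have gs: "g$e = s * \<bar>g$e\<bar>" if "g \<in> G" for g
    proof (cases "g$e = 0")
      case False
      then have "g$e = g0$e" using cons g0 that by blast
      then have "g$e = s" by (simp add: s_def)
      then show ?thesis using s by auto
    qed simp
    have \<gamma>s: "\<gamma>$e = s * \<bar>\<gamma>$e\<bar>"
    proof (cases "\<gamma>$e = 0")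
      case False
      then have "\<gamma>$e = g0$e" using agree g0 by blast
      then have "\<gamma>$e = s" by (simp add: s_def)
      then show ?thesis using s by auto
    qed simp
    have "\<bar>\<gamma>$e\<bar> \<le> 1" using pm[OF ga] by (auto dest: spec[of _ e])
    also have "1 = \<bar>g0$e\<bar>" using s by (auto simp: s_def)
    also have "\<dots> \<le> (\<Sum>g\<in>G. \<bar>g$e\<bar>)" using g0 G by (intro member_le_sum) auto
    finally have le: "\<bar>\<gamma>$e\<bar> \<le> (\<Sum>g\<in>G. \<bar>g$e\<bar>)" .
    have "\<sigma>$e = s * (\<Sum>g\<in>G. \<bar>g$e\<bar>)"
      unfolding \<sigma>e sum_distrib_left using gs by (intro sum.cong) auto
    then have "\<nu>$e = s * ((\<Sum>g\<in>G. \<bar>g$e\<bar>) - \<bar>\<gamma>$e\<bar>)"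
      using \<gamma>s by (simp add: \<nu>_def algebra_simps)
    then show ?thesis using le s by (auto simp: abs_mult)
  next
    case False
    then have "\<gamma>$e = 0" using cover by blast
    moreover have "\<sigma>$e = 0" using False by (simp add: \<sigma>e)
    ultimately show ?thesis using False by (simp add: \<nu>_def)
  qed
  have sum\<nu>: "(\<Sum>e\<in>UNIV. \<bar>\<nu>$e\<bar>) = (\<Sum>g\<in>G. (norm g)\<^sup>2) - (norm \<gamma>)\<^sup>2"
  proof -
    have "(\<Sum>e\<in>UNIV. \<bar>\<nu>$e\<bar>) = (\<Sum>e\<in>UNIV. \<Sum>g\<in>G. \<bar>g$e\<bar>) - (\<Sum>e\<in>UNIV. \<bar>\<gamma>$e\<bar>)"
      by (simp add: abs\<nu> sum_subtractf)
    also have "(\<Sum>e\<in>UNIV. \<Sum>g\<in>G. \<bar>g$e\<bar>) = (\<Sum>g\<in>G. \<Sum>e\<in>UNIV. \<bar>g$e\<bar>)" by (rule sum.swap)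
    also have "\<dots> = (\<Sum>g\<in>G. (norm g)\<^sup>2)" using G pm by (intro sum.cong) (auto simp: norm2_pm1)
    also have "(\<Sum>e\<in>UNIV. \<bar>\<gamma>$e\<bar>) = (norm \<gamma>)\<^sup>2" using norm2_pm1[OF pm[OF ga]] by simp
    finally show ?thesis .
  qed
  have circ: "\<forall>\<gamma>\<in>lattice_circuits M. 2 * inner x \<gamma> \<le> (norm \<gamma>)\<^sup>2" using V0_circ[OF x] by blast
  have "2 * inner x \<nu> \<le> (\<Sum>e\<in>UNIV. \<bar>\<nu>$e\<bar>)" by (rule key_ineq[OF TU circ \<nu>l])
  moreover have "2 * inner x \<nu> = (\<Sum>g\<in>G. (norm g)\<^sup>2) - 2 * inner x \<gamma>"
  proof -
    have "inner x \<nu> = (\<Sum>g\<in>G. inner x g) - inner x \<gamma>" by (simp add: \<nu>_def \<sigma>_def inner_diff_right inner_sum_right)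
    moreover have "2 * (\<Sum>g\<in>G. inner x g) = (\<Sum>g\<in>G. (norm g)\<^sup>2)"
      using Gt by (simp add: sum_distrib_left)
    ultimately show ?thesis by (simp add: algebra_simps)
  qed
  ultimately have "(norm \<gamma>)\<^sup>2 \<le> 2 * inner x \<gamma>" using sum\<nu> by simp
  then show ?thesis using circ ga by (simp add: order_antisym)
qed



lemma face_T1:
  fixes M :: "real^'e::finite^'r::finite"
  assumes F: "F face_of voronoi0 M" and x: "x \<in> rel_interior F" and g: "\<gamma> \<in> lattice_circuits M"
    and t: "2 * inner x \<gamma> = (norm \<gamma>)\<^sup>2" and y: "y \<in> F"
  shows "2 * inner y \<gamma> = (norm \<gamma>)\<^sup>2"
proof -
  have cF: "convex F" using F face_of_imp_convex by blast
  have "y \<in> affine hull F" by (rule hull_inc[OF y])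
  then obtain e where e: "e > 1" "(1 - e) *\<^sub>R y + e *\<^sub>R x \<in> F"
    using convex_rel_interior_if2[OF cF x] by blast
  have FV: "F \<subseteq> voronoi0 M" using F face_of_imp_subset by blast
  have V: "\<forall>z\<in>F. 2 * inner z \<gamma> \<le> (norm \<gamma>)\<^sup>2" using V0_circ FV g by blast
  then have "2 * inner ((1 - e) *\<^sub>R y + e *\<^sub>R x) \<gamma> \<le> (norm \<gamma>)\<^sup>2" using e by blast
  moreover have "2 * inner ((1 - e) *\<^sub>R y + e *\<^sub>R x) \<gamma> = (1-e) * (2 * inner y \<gamma>) + e * (2 * inner x \<gamma>)"
    by (simp add: inner_add_left algebra_simps)
  ultimately have "(1-e) * (2 * inner y \<gamma>) + e * (norm \<gamma>)\<^sup>2 \<le> (norm \<gamma>)\<^sup>2" using t by simp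
  then have "(e - 1) * ((norm \<gamma>)\<^sup>2 - 2 * inner y \<gamma>) \<le> 0" by (simp add: algebra_simps)
  then have "(norm \<gamma>)\<^sup>2 - 2 * inner y \<gamma> \<le> 0" using e(1) by (simp add: mult_le_0_iff)
  moreover have "2 * inner y \<gamma> \<le> (norm \<gamma>)\<^sup>2" using V y by blast
  ultimately show ?thesis by linarith
qed

lemma face_absorb:
  fixes M :: "real^'e::finite^'r::finite"
  assumes TU: "totally_unimodular M" and F: "F face_of voronoi0 M" and x: "x \<in> F" and y: "y \<in> voronoi0 M"
    and tt: "\<forall>\<gamma>\<in>lattice_circuits M. 2 * inner x \<gamma> = (norm \<gamma>)\<^sup>2 \<longrightarrow> 2 * inner y \<gamma> = (norm \<gamma>)\<^sup>2"
  shows "y \<in> F"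
proof (cases "y = x")
  case True thus ?thesis using x by simp
next
  case False
  have xV: "x \<in> voronoi0 M" using F x face_of_imp_subset by blast
  define w where "w s = x + s *\<^sub>R (x - y)" for s :: real
  have wexp: "2 * inner (w s) \<gamma> = 2 * inner x \<gamma> + s * (2 * inner x \<gamma> - 2 * inner y \<gamma>)" for s \<gamma>
    by (simp add: w_def inner_add_left inner_diff_left algebra_simps)
  have ev: "\<forall>\<gamma>\<in>lattice_circuits M. eventually (\<lambda>s. 2 * inner (w s) \<gamma> \<le> (norm \<gamma>)\<^sup>2) (at_right 0)"
  proof
    fix \<gamma> assume g: "\<gamma> \<in> lattice_circuits M"
    show "eventually (\<lambda>s. 2 * inner (w s) \<gamma> \<le> (norm \<gamma>)\<^sup>2) (at_right 0)"
    proof (cases "2 * inner x \<gamma> = (norm \<gamma>)\<^sup>2")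
      case True
      then have "2 * inner y \<gamma> = (norm \<gamma>)\<^sup>2" using tt g by blast
      then show ?thesis using True by (simp add: wexp)
    next
      case False
      then have lt: "2 * inner x \<gamma> < (norm \<gamma>)\<^sup>2" using V0_circ[OF xV g] by simp
      have "((\<lambda>s. 2 * inner x \<gamma> + s * (2 * inner x \<gamma> - 2 * inner y \<gamma>)) \<longlongrightarrow>
              2 * inner x \<gamma> + 0 * (2 * inner x \<gamma> - 2 * inner y \<gamma>)) (at_right 0)"
        by (intro tendsto_intros)
      then have "((\<lambda>s. 2 * inner x \<gamma> + s * (2 * inner x \<gamma> - 2 * inner y \<gamma>)) \<longlongrightarrow> 2 * inner x \<gamma>) (at_right 0)"
        by simp
      from order_tendstoD(2)[OF this lt] show ?thesis
        by (rule eventually_mono) (simp add: wexp)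
    qed
  qed
  have "eventually (\<lambda>s. \<forall>\<gamma>\<in>lattice_circuits M. 2 * inner (w s) \<gamma> \<le> (norm \<gamma>)\<^sup>2) (at_right 0)"
    by (rule eventually_ball_finite[OF finite_circ ev])
  then obtain b where b: "b > 0" "\<forall>s>0. s < b \<longrightarrow> (\<forall>\<gamma>\<in>lattice_circuits M. 2 * inner (w s) \<gamma> \<le> (norm \<gamma>)\<^sup>2)"
    unfolding eventually_at_right_field by auto
  define s where "s = b / 2"
  have s: "s > 0" "s < b" using b by (auto simp: s_def)
  have xf: "x \<in> flows M" and yf: "y \<in> flows M" using xV y V0_flows by blast+
  have "w s \<in> flows M" unfolding w_def by (intro flows_add flows_scale flows_diff xf yf)
  then have wV: "w s \<in> voronoi0 M" using b s unfolding V0_char[OF TU] by auto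
  define u where "u = s / (1 + s)"
  have u: "u > 0" "u < 1" using s by (auto simp: u_def)
  have "(1 + s) *\<^sub>R ((1 - u) *\<^sub>R w s + u *\<^sub>R y) = (1 + s) *\<^sub>R x"
  proof -
    have "(1 + s) * (1 - u) = 1" "(1 + s) * u = s" using s by (auto simp: u_def field_simps)
    then show ?thesis by (simp add: scaleR_add_right w_def algebra_simps)
  qed
  then have xeq: "x = (1 - u) *\<^sub>R w s + u *\<^sub>R y" using s by simp
  have "w s - y = (1 + s) *\<^sub>R (x - y)" by (simp add: w_def algebra_simps)
  then have "w s \<noteq> y" using False s by auto
  then have "x \<in> open_segment (w s) y" using xeq u unfolding in_segment(2) by blast
  then show "y \<in> F" using F wV y x unfolding face_of_def by blast
qed

lemma face_eq:
  fixes M :: "real^'e::finite^'r::finite"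
  assumes TU: "totally_unimodular M" and F: "F face_of voronoi0 M" and ne: "F \<noteq> {}"
  shows "F = {y \<in> voronoi0 M. \<forall>\<gamma>\<in>U_face M F. y \<in> circuit_hyperplane M \<gamma>}"
proof
  show "F \<subseteq> {y \<in> voronoi0 M. \<forall>\<gamma>\<in>U_face M F. y \<in> circuit_hyperplane M \<gamma>}"
    using F face_of_imp_subset by (auto simp: U_face_def)
  show "{y \<in> voronoi0 M. \<forall>\<gamma>\<in>U_face M F. y \<in> circuit_hyperplane M \<gamma>} \<subseteq> F"
  proof
    fix y assume y: "y \<in> {y \<in> voronoi0 M. \<forall>\<gamma>\<in>U_face M F. y \<in> circuit_hyperplane M \<gamma>}"
    have cF: "convex F" using F face_of_imp_convex by blast
    obtain x where x: "x \<in> rel_interior F" using rel_interior_eq_empty[OF cF] ne by blast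
    have xF: "x \<in> F" using rel_interior_subset x by blast
    have FV: "F \<subseteq> voronoi0 M" using F face_of_imp_subset by blast
    have "\<forall>\<gamma>\<in>lattice_circuits M. 2 * inner x \<gamma> = (norm \<gamma>)\<^sup>2 \<longrightarrow> 2 * inner y \<gamma> = (norm \<gamma>)\<^sup>2"
    proof (intro ballI impI)
      fix \<gamma> assume g: "\<gamma> \<in> lattice_circuits M" and t: "2 * inner x \<gamma> = (norm \<gamma>)\<^sup>2"
      have "F \<subseteq> circuit_hyperplane M \<gamma>"
        using face_T1[OF F x g t] FV V0_flows by (auto simp: circuit_hyperplane_def)
      then have "\<gamma> \<in> U_face M F" using g by (simp add: U_face_def)
      then show "2 * inner y \<gamma> = (norm \<gamma>)\<^sup>2" using y by (auto simp: circuit_hyperplane_def)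
    qed
    then show "y \<in> F" using face_absorb[OF TU F xF] y by blast
  qed
qed

lemma phi_fst: "fst (phi M F) = (\<Union>\<gamma>\<in>U_face M F. supp \<gamma>)"
  by (simp add: phi_def Let_def)

lemma phi_snd: "snd (phi M F) = restrict (\<lambda>e. sgn ((SOME \<gamma>. \<gamma> \<in> U_face M F \<and> e \<in> supp \<gamma>) $ e)) (\<Union>\<gamma>\<in>U_face M F. supp \<gamma>)"
  by (simp add: phi_def Let_def)

lemma U_tight: "\<gamma> \<in> U_face M F \<Longrightarrow> x \<in> F \<Longrightarrow> 2 * inner x \<gamma> = (norm \<gamma>)\<^sup>2 \<and> \<gamma> \<in> lattice_circuits M"
  by (auto simp: U_face_def circuit_hyperplane_def)

lemma phi_sign:
  fixes M :: "real^'e::finite^'r::finite"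
  assumes TU: "totally_unimodular M" and FV: "F \<subseteq> voronoi0 M" and ne: "F \<noteq> {}"
    and g: "\<gamma> \<in> U_face M F" and e: "\<gamma>$e \<noteq> 0"
  shows "snd (phi M F) e = \<gamma>$e"
proof -
  have eS: "e \<in> (\<Union>\<gamma>\<in>U_face M F. supp \<gamma>)" using g e by (auto simp: supp_def)
  define \<gamma>0 where "\<gamma>0 = (SOME \<gamma>. \<gamma> \<in> U_face M F \<and> e \<in> supp \<gamma>)"
  have g0: "\<gamma>0 \<in> U_face M F \<and> e \<in> supp \<gamma>0" unfolding \<gamma>0_def
    by (rule someI[of _ \<gamma>]) (use g e in \<open>auto simp: supp_def\<close>)
  obtain x where x: "x \<in> F" using ne by blast
  have "\<gamma>0$e = \<gamma>$e"
    using consistent[OF TU _ _ _ _ _ _ e, of x \<gamma>0] FV x U_tight[OF g x] U_tight[of \<gamma>0 M F x] g0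
    by (auto simp: supp_def)
  moreover have "\<gamma>$e \<in> {-1,1}" using lc_facts(3)[OF conjunct2[OF U_tight[OF g x]]] e by blast
  ultimately have "sgn (\<gamma>0$e) = \<gamma>$e" by auto
  moreover have "snd (phi M F) e = sgn (\<gamma>0 $ e)" unfolding phi_snd \<gamma>0_def using eS by simp
  ultimately show ?thesis by simp
qed


lemma U_sub:
  fixes M :: "real^'e::finite^'r::finite"
  assumes TU: "totally_unimodular M"
    and F1: "F1 face_of voronoi0 M" and F1ne: "F1 \<noteq> {}"
    and F2: "F2 face_of voronoi0 M" and F2ne: "F2 \<noteq> {}"
    and eq: "phi M F1 = phi M F2"
  shows "U_face M F1 \<subseteq> U_face M F2"
proof
  fix \<gamma> assume g: "\<gamma> \<in> U_face M F1"
  have gl: "\<gamma> \<in> lattice_circuits M" using g by (simp add: U_face_def)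
  have F1V: "F1 \<subseteq> voronoi0 M" using F1 face_of_imp_subset by blast
  have F2V: "F2 \<subseteq> voronoi0 M" using F2 face_of_imp_subset by blast
  have "F2 \<subseteq> circuit_hyperplane M \<gamma>"
  proof
    fix x assume x: "x \<in> F2"
    have xV: "x \<in> voronoi0 M" using F2V x by blast
    have G: "U_face M F2 \<subseteq> lattice_circuits M" by (auto simp: U_face_def)
    have "2 * inner x \<gamma> = (norm \<gamma>)\<^sup>2"
    proof (rule conf_tight[OF TU xV G finite_subset[OF G finite_circ] _ _ gl])
      show "\<forall>g\<in>U_face M F2. 2 * inner x g = (norm g)\<^sup>2" using U_tight x by blast
      show "\<forall>g1\<in>U_face M F2. \<forall>g2\<in>U_face M F2. \<forall>e. g1$e \<noteq> 0 \<and> g2$e \<noteq> 0 \<longrightarrow> g1$e = g2$e"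
      proof (intro ballI allI impI)
        fix g1 g2 e assume g1: "g1 \<in> U_face M F2" and g2: "g2 \<in> U_face M F2" and h: "g1$e \<noteq> 0 \<and> g2$e \<noteq> 0"
        show "g1$e = g2$e"
          using consistent[OF TU xV conjunct2[OF U_tight[OF g1 x]] conjunct2[OF U_tight[OF g2 x]]
              conjunct1[OF U_tight[OF g1 x]] conjunct1[OF U_tight[OF g2 x]]] h by blast
      qed
      show "\<forall>e. \<gamma>$e \<noteq> 0 \<longrightarrow> (\<exists>g\<in>U_face M F2. g$e \<noteq> 0)"
      proof (intro allI impI)
        fix e assume "\<gamma>$e \<noteq> 0"
        then have "e \<in> fst (phi M F1)" using g by (auto simp: phi_fst supp_def)
        then have "e \<in> fst (phi M F2)" using eq by simp
        then show "\<exists>g\<in>U_face M F2. g$e \<noteq> 0" by (auto simp: phi_fst supp_def)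
      qed
      show "\<forall>g\<in>U_face M F2. \<forall>e. \<gamma>$e \<noteq> 0 \<and> g$e \<noteq> 0 \<longrightarrow> \<gamma>$e = g$e"
      proof (intro ballI allI impI)
        fix g' e assume g': "g' \<in> U_face M F2" and h: "\<gamma>$e \<noteq> 0 \<and> g'$e \<noteq> 0"
        have "\<gamma>$e = snd (phi M F1) e" using phi_sign[OF TU F1V F1ne g] h by simp
        also have "\<dots> = snd (phi M F2) e" using eq by simp
        also have "\<dots> = g'$e" using phi_sign[OF TU F2V F2ne g'] h by simp
        finally show "\<gamma>$e = g'$e" .
      qed
    qed
    then show "x \<in> circuit_hyperplane M \<gamma>" using xV V0_flows by (simp add: circuit_hyperplane_def)
  qed
  then show "\<gamma> \<in> U_face M F2" using gl by (simp add: U_face_def)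
qed

theorem mainTheorem14:
  fixes M :: "real^'e::finite^'r::finite"
  assumes "totally_unimodular M"
  shows "(\<forall>F. F face_of voronoi0 M \<and> F \<noteq> {} \<longrightarrow> phi M F \<in> SC M)
    \<and> inj_on (phi M) {F. F face_of voronoi0 M \<and> F \<noteq> {}}
    \<and> (\<forall>F1 F2. F1 face_of voronoi0 M \<and> F1 \<noteq> {} \<and> F2 face_of voronoi0 M \<and> F1 \<subseteq> F2
          \<longrightarrow> sc_le (phi M F1) (phi M F2))"
proof -
  note TU = assms
  have P1: "phi M F \<in> SC M" if F: "F face_of voronoi0 M" and ne: "F \<noteq> {}" for F
  proof -
    have FV: "F \<subseteq> voronoi0 M" using F face_of_imp_subset by blast
    define S where "S = fst (phi M F)"
    define \<epsilon> where "\<epsilon> = snd (phi M F)"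
    have val: "\<exists>g\<in>U_face M F. g$e \<noteq> 0 \<and> \<epsilon> e = g$e" if "e \<in> S" for e
    proof -
      from that obtain g where g: "g \<in> U_face M F" "g$e \<noteq> 0" by (auto simp: S_def phi_fst supp_def)
      then show ?thesis using phi_sign[OF TU FV ne g] by (auto simp: \<epsilon>_def)
    qed
    have epm: "\<forall>e\<in>S. \<epsilon> e \<in> {-1,1}"
    proof
      fix e assume "e \<in> S"
      then obtain g where g: "g \<in> U_face M F" "g$e \<noteq> 0" "\<epsilon> e = g$e" using val by blast
      have "g$e \<in> {-1,0,1}" using lc_facts(3)[of g M] g(1) by (auto simp: U_face_def)
      then show "\<epsilon> e \<in> {-1,1}" using g by auto
    qed
    have ext: "\<epsilon> \<in> extensional S" unfolding \<epsilon>_def S_def phi_snd phi_fst by simp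
    have ori: "oriented_submatroid (phi M F)"
      unfolding oriented_submatroid_def using epm ext by (simp add: PiE_iff S_def \<epsilon>_def)
    have sc: "\<exists>w::'e \<Rightarrow> nat. w e \<ge> 1 \<and> (\<Sum>f \<in> S. (real (w f) * \<epsilon> f) *\<^sub>R column f M) = 0"
      if e: "e \<in> S" for e
    proof -
      obtain g where g: "g \<in> U_face M F" "g$e \<noteq> 0" "\<epsilon> e = g$e" using val[OF e] by blast
      have gl: "g \<in> lattice_circuits M" using g(1) by (simp add: U_face_def)
      define w :: "'e \<Rightarrow> nat" where "w f = (if g$f \<noteq> 0 then 1 else 0)" for f
      have wf: "real (w f) * \<epsilon> f = g$f" if "f \<in> S" for f
      proof (cases "g$f = 0")
        case True then show ?thesis by (simp add: w_def)
      next
        case False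
        then have "\<epsilon> f = g$f" using phi_sign[OF TU FV ne g(1)] by (simp add: \<epsilon>_def)
        then show ?thesis using False by (simp add: w_def)
      qed
      have sgS: "supp g \<subseteq> S" using g(1) by (auto simp: S_def phi_fst)
      have "(\<Sum>f \<in> S. (real (w f) * \<epsilon> f) *\<^sub>R column f M) = 0"
        unfolding Finite_Cartesian_Product.vec_eq_iff sum_col
      proof
        fix i
        have "(\<Sum>f\<in>S. real (w f) * \<epsilon> f * M$i$f) = (\<Sum>f\<in>S. M$i$f * g$f)"
          using wf by (intro sum.cong) auto
        also have "\<dots> = (\<Sum>f\<in>UNIV. M$i$f * g$f)" by (rule sum_supp[OF sgS, symmetric])
        also have "\<dots> = 0" using lc_facts(2)[OF gl] by (simp add: flows_iff)
        finally show "(\<Sum>f\<in>S. real (w f) * \<epsilon> f * M$i$f) = 0 $ i" by simp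
      qed
      moreover have "w e \<ge> 1" using g(2) by (simp add: w_def)
      ultimately show ?thesis by blast
    qed
    show ?thesis
      unfolding SC_def strongly_connected_def using ori sc by (simp add: S_def \<epsilon>_def)
  qed
  have P2: "inj_on (phi M) {F. F face_of voronoi0 M \<and> F \<noteq> {}}"
  proof (rule inj_onI)
    fix F1 F2 assume F1: "F1 \<in> {F. F face_of voronoi0 M \<and> F \<noteq> {}}"
      and F2: "F2 \<in> {F. F face_of voronoi0 M \<and> F \<noteq> {}}" and eq: "phi M F1 = phi M F2"
    have "U_face M F1 \<subseteq> U_face M F2" using U_sub[OF TU _ _ _ _ eq] F1 F2 by blast
    moreover have "U_face M F2 \<subseteq> U_face M F1" using U_sub[OF TU _ _ _ _ eq[symmetric]] F1 F2 by blast
    ultimately have U: "U_face M F1 = U_face M F2" by blast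
    have "F1 = {y \<in> voronoi0 M. \<forall>\<gamma>\<in>U_face M F1. y \<in> circuit_hyperplane M \<gamma>}"
      using face_eq[OF TU] F1 by blast
    also have "\<dots> = {y \<in> voronoi0 M. \<forall>\<gamma>\<in>U_face M F2. y \<in> circuit_hyperplane M \<gamma>}" using U by simp
    also have "\<dots> = F2" using face_eq[OF TU] F2 by blast
    finally show "F1 = F2" .
  qed
  have P3: "sc_le (phi M F1) (phi M F2)"
    if F1: "F1 face_of voronoi0 M" and ne: "F1 \<noteq> {}" and F2: "F2 face_of voronoi0 M" and sub: "F1 \<subseteq> F2"
    for F1 F2
  proof -
    have ne2: "F2 \<noteq> {}" using ne sub by blast
    have F1V: "F1 \<subseteq> voronoi0 M" using F1 face_of_imp_subset by blast
    have F2V: "F2 \<subseteq> voronoi0 M" using F2 face_of_imp_subset by blast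
    have US: "U_face M F2 \<subseteq> U_face M F1" using sub by (auto simp: U_face_def)
    have fs: "fst (phi M F2) \<subseteq> fst (phi M F1)" using US by (auto simp: phi_fst)
    have "snd (phi M F2) = restrict (snd (phi M F1)) (fst (phi M F2))"
    proof
      fix e
      show "snd (phi M F2) e = restrict (snd (phi M F1)) (fst (phi M F2)) e"
      proof (cases "e \<in> fst (phi M F2)")
        case True
        then obtain g where g: "g \<in> U_face M F2" "g$e \<noteq> 0" by (auto simp: phi_fst supp_def)
        have "snd (phi M F2) e = g$e" using phi_sign[OF TU F2V ne2 g] .
        moreover have "snd (phi M F1) e = g$e" using phi_sign[OF TU F1V ne _ g(2)] US g(1) by blast
        ultimately show ?thesis using True by simp
      next
        case False
        then show ?thesis by (simp add: phi_snd phi_fst)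
      qed
    qed
    then show ?thesis using fs by (simp add: sc_le_def)
  qed
  show ?thesis using P1 P2 P3 by blast
qed

end
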